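(* Let $M$ be a Sidon set in $\mathbb{F}_2^t$ with $|M|\geq 3$. Then the following are equivalent: (a) $M$ is maximal; (b) $S_3(M) = \mathbb{F}_2^t$; (c) $S_3^*(M)\cup M = \mathbb{F}_2^t$ and $S_3^*(M)\cap M = \emptyset$. Here $S_3(M)=\{m_1+m_2+m_3 : m_1,m_2,m_3\in M\}$ and $S_3^*(M)=\{m_1+m_2+m_3 : m_1,m_2,m_3\in M \text{ pairwise distinct}\}$.
   Context: $\mathbb{F}_2^t$ is the $t$-dimensional vector space over $\mathbb{F}_2$. A subset $M\subseteq \mathbb{F}_2^t$ is Sidon if $m_1+m_2\neq m_3+m_4$ for all pairwise distinct $m_1,m_2,m_3,m_4\in M$. A Sidon set $M$ is maximal if $M=S$ for every Sidon set $S$ with $M\subseteq S\subseteq\mathbb{F}_2^t$. *)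

theory Defs
  imports "HOL-Analysis.Analysis" "HOL-Library.Z2"
begin

text \<open>F_2^t is modelled as the type bit ^ 'n with t = CARD('n); addition is componentwise.\<close>

definition sidon :: "('a::ab_group_add) set \<Rightarrow> bool" where
  "sidon M \<longleftrightarrow> (\<forall>m1\<in>M. \<forall>m2\<in>M. \<forall>m3\<in>M. \<forall>m4\<in>M.
     distinct [m1, m2, m3, m4] \<longrightarrow> m1 + m2 \<noteq> m3 + m4)"

definition maximal_sidon :: "('a::ab_group_add) set \<Rightarrow> bool" where
  "maximal_sidon M \<longleftrightarrow> sidon M \<and> (\<forall>S. sidon S \<and> M \<subseteq> S \<longrightarrow> M = S)"

definition S3 :: "('a::ab_group_add) set \<Rightarrow> 'a set" where
  "S3 M = {m1 + m2 + m3 | m1 m2 m3. m1 \<in> M \<and> m2 \<in> M \<and> m3 \<in> M}"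

definition S3_star :: "('a::ab_group_add) set \<Rightarrow> 'a set" where
  "S3_star M = {m1 + m2 + m3 | m1 m2 m3. m1 \<in> M \<and> m2 \<in> M \<and> m3 \<in> M \<and> distinct [m1, m2, m3]}"

end

theory Submission
  imports Defs
begin

lemma bit_self: "(b::bit) + b = 0"
  by (cases b) simp_all
lemma vadd_self: "(x::bit^'n) + x = 0"
  by (simp add: vec_eq_iff bit_self)
lemma vtwo: "2 * (x::bit^'n) = 0"
  unfolding mult_2 by (rule vadd_self)

lemma vadd_cancel3: "(y::bit^'n) + x + x = y"
  by (simp add: add.assoc vadd_self)
lemma vadd_cancel4: "(x::bit^'n) + x + y = y"
  by (simp add: vadd_self vtwo)
lemma vadd_cancel1: "(x::bit^'n) + (x + y) = y"
  by (simp add: add.assoc[symmetric] vadd_self)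
lemma vadd_cancel2: "(x::bit^'n) + y + x = y"
  by (simp add: add.commute[of x y] vadd_cancel3)
lemma vadd_move: "((a::bit^'n) + b = c) \<longleftrightarrow> (a = c + b)"
  by (auto simp: vadd_cancel3)
lemma vadd_zero: "((a::bit^'n) + b = 0) \<longleftrightarrow> a = b"
  using vadd_move[of a b 0] by simp

lemma S3_star_disj:
  fixes M :: "(bit ^ 'n) set"
  assumes "sidon M"
  shows "S3_star M \<inter> M = {}"
proof (rule ccontr)
  assume "S3_star M \<inter> M \<noteq> {}"
  then obtain m m1 m2 m3 where m: "m \<in> M" "m1 \<in> M" "m2 \<in> M" "m3 \<in> M"
    "distinct [m1,m2,m3]" "m = m1 + m2 + m3" unfolding S3_star_def by blast
  have e: "m + m1 = m2 + m3" using m(6) vadd_move[of m m1 "m2 + m3"] by (simp add: ac_simps)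
  show False
  proof (cases "m \<in> {m1,m2,m3}")
    case True
    then consider "m = m1" | "m = m2" | "m = m3" by auto
    then show ?thesis
    proof cases
      case 1
      have "m2 + m3 = m1 + m" using m(6) by (simp add: add.assoc vadd_cancel1)
      then have "m2 + m3 = 0" using 1 by (simp add: vadd_self vtwo)
      then show ?thesis using m(5) by (simp add: vadd_zero)
    next
      case 2
      have "m = m2 + (m1 + m3)" using m(6) by (simp add: ac_simps)
      then have "m1 + m3 = m2 + m" by (simp add: vadd_cancel1)
      then have "m1 + m3 = 0" using 2 by (simp add: vadd_self vtwo)
      then show ?thesis using m(5) by (simp add: vadd_zero)
    next
      case 3
      have "m = m3 + (m1 + m2)" using m(6) by (simp add: ac_simps)
      then have "m1 + m2 = m3 + m" by (simp add: vadd_cancel1)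
      then have "m1 + m2 = 0" using 3 by (simp add: vadd_self vtwo)
      then show ?thesis using m(5) by (simp add: vadd_zero)
    qed
  next
    case False
    then have "distinct [m, m1, m2, m3]" using m(5) by auto
    then show ?thesis using assms[unfolded sidon_def, rule_format, of m m1 m2 m3] m e by blast
  qed
qed

lemma S3_eq:
  fixes M :: "(bit ^ 'n) set"
  shows "S3 M = S3_star M \<union> M"
proof
  show "S3 M \<subseteq> S3_star M \<union> M"
  proof
    fix x assume "x \<in> S3 M"
    then obtain m1 m2 m3 where m: "m1 \<in> M" "m2 \<in> M" "m3 \<in> M" "x = m1 + m2 + m3"
      unfolding S3_def by blast
    show "x \<in> S3_star M \<union> M"
    proof (cases "distinct [m1,m2,m3]")
      case True then show ?thesis using m unfolding S3_star_def by blast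
    next
      case False
      then have "m1 = m2 \<or> m1 = m3 \<or> m2 = m3" by auto
      then have "x \<in> M"
      proof (elim disjE)
        assume "m1 = m2" then show ?thesis using m by (simp add: vadd_cancel4 vtwo)
      next
        assume "m1 = m3" then show ?thesis using m by (simp add: vadd_cancel2)
      next
        assume "m2 = m3" then show ?thesis using m by (simp add: vadd_cancel3)
      qed
      then show ?thesis by blast
    qed
  qed
next
  show "S3_star M \<union> M \<subseteq> S3 M"
  proof
    fix x assume "x \<in> S3_star M \<union> M"
    then show "x \<in> S3 M"
    proof
      assume "x \<in> S3_star M" then show ?thesis unfolding S3_star_def S3_def by blast
    next
      assume "x \<in> M"
      moreover have "x = x + x + x" by (simp only: vadd_cancel4)
      ultimately show ?thesis unfolding S3_def by blast
    qed
  qed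
qed

lemma insert_sidon:
  fixes M :: "(bit ^ 'n) set"
  assumes "sidon M" "x \<notin> M"
  shows "sidon (insert x M) \<longleftrightarrow> x \<notin> S3_star M"
proof
  assume s: "sidon (insert x M)"
  show "x \<notin> S3_star M"
  proof
    assume "x \<in> S3_star M"
    then obtain m1 m2 m3 where m: "m1 \<in> M" "m2 \<in> M" "m3 \<in> M"
      "distinct [m1,m2,m3]" "x = m1 + m2 + m3" unfolding S3_star_def by blast
    have "x + m1 = m2 + m3" using m(5) vadd_move[of x m1 "m2 + m3"] by (simp add: ac_simps)
    note e = this
    have "x \<noteq> m1" "x \<noteq> m2" "x \<noteq> m3" using m(1,2,3) assms(2) by auto
    then have "distinct [x, m1, m2, m3]" using m(4) by auto
    then show False using s[unfolded sidon_def, rule_format, of x m1 m2 m3] m e by blast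
  qed
next
  assume nx: "x \<notin> S3_star M"
  show "sidon (insert x M)"
    unfolding sidon_def
  proof (intro ballI impI)
    fix a b c d assume h: "a \<in> insert x M" "b \<in> insert x M" "c \<in> insert x M" "d \<in> insert x M"
      "distinct [a,b,c,d]"
    show "a + b \<noteq> c + d"
    proof
      assume e: "a + b = c + d"
      have gen: False if "p \<in> M" "q \<in> M" "r \<in> M" "distinct [x,p,q,r]" "x + p = q + r" for p q r
      proof -
        have "x = q + r + p" using that(5) vadd_move by blast
        then have "x = p + q + r" by (simp add: ac_simps)
        moreover have "distinct [p,q,r]" using that(4) by simp
        ultimately have "x \<in> S3_star M" using that(1,2,3) unfolding S3_star_def by blast
        then show False using nx by blast
      qed
      consider "a = x" | "b = x" | "c = x" | "d = x" | "a \<in> M \<and> b \<in> M \<and> c \<in> M \<and> d \<in> M"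
        using h by auto
      then show False
      proof cases
        case 1
        then have "b \<in> M" "c \<in> M" "d \<in> M" using h by auto
        moreover have "distinct [x,b,c,d]" using h(5) 1 by simp
        moreover have "x + b = c + d" using e 1 by simp
        ultimately show ?thesis using gen by blast
      next
        case 2
        then have "a \<in> M" "c \<in> M" "d \<in> M" using h by auto
        moreover have "distinct [x,a,c,d]" using h(5) 2 by auto
        moreover have "x + a = c + d" using e 2 by (simp add: add.commute)
        ultimately show ?thesis using gen by blast
      next
        case 3
        then have "a \<in> M" "b \<in> M" "d \<in> M" using h by auto
        moreover have "distinct [x,d,a,b]" using h(5) 3 by auto
        moreover have "x + d = a + b" using e 3 by simp
        ultimately show ?thesis using gen by blast
      next
        case 4
        then have "a \<in> M" "b \<in> M" "c \<in> M" using h by auto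
        moreover have "distinct [x,c,a,b]" using h(5) 4 by auto
        moreover have "x + c = a + b" using e 4 by (simp add: add.commute)
        ultimately show ?thesis using gen by blast
      next
        case 5 then show ?thesis using assms(1)[unfolded sidon_def, rule_format, of a b c d] h(5) e by blast
      qed
    qed
  qed
qed

lemma sidon_subset:
  assumes "sidon S" "M \<subseteq> S" shows "sidon M"
  unfolding sidon_def
proof (intro ballI impI)
  fix a b c d assume h: "a \<in> M" "b \<in> M" "c \<in> M" "d \<in> M" "distinct [a,b,c,d]"
  then have "a \<in> S" "b \<in> S" "c \<in> S" "d \<in> S" using assms(2) by auto
  then show "a + b \<noteq> c + d" using assms(1)[unfolded sidon_def, rule_format, of a b c d] h(5) by blast
qed

theorem proposition1p5:
  fixes M :: "(bit ^ 'n) set"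
  assumes "sidon M" and "card M \<ge> 3"
  shows "(maximal_sidon M \<longleftrightarrow> S3 M = UNIV)
       \<and> (S3 M = UNIV \<longleftrightarrow> (S3_star M \<union> M = UNIV \<and> S3_star M \<inter> M = {}))"
proof
  show "maximal_sidon M \<longleftrightarrow> S3 M = UNIV"
  proof
    assume mx: "maximal_sidon M"
    show "S3 M = UNIV"
    proof (rule ccontr)
      assume "S3 M \<noteq> UNIV"
      then obtain x where "x \<notin> S3 M" by blast
      then have "x \<notin> S3_star M" "x \<notin> M" using S3_eq[of M] by auto
      then have si: "sidon (insert x M)" using insert_sidon[OF assms(1), of x] by simp
      have "M = insert x M"
      proof -
        have "\<forall>S. sidon S \<and> M \<subseteq> S \<longrightarrow> M = S" using mx unfolding maximal_sidon_def by (rule conjunct2)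
        then have "sidon (insert x M) \<and> M \<subseteq> insert x M \<longrightarrow> M = insert x M" by (rule spec)
        moreover have "M \<subseteq> insert x M" by (rule subset_insertI)
        ultimately show ?thesis using si by blast
      qed
      then have "x \<in> M" by (metis insertI1)
      with \<open>x \<notin> M\<close> show False by (rule notE)
    qed
  next
    assume u: "S3 M = UNIV"
    show "maximal_sidon M" unfolding maximal_sidon_def
    proof (intro conjI allI impI assms(1))
      fix S assume S: "sidon S \<and> M \<subseteq> S"
      show "M = S"
      proof (rule ccontr)
        assume "M \<noteq> S"
        then obtain x where x: "x \<in> S" "x \<notin> M" using S by blast
        have sub: "insert x M \<subseteq> S" using S x(1) by (simp add: insert_subset)
        have "sidon (insert x M)" using sidon_subset[OF conjunct1[OF S] sub] .
        then have "x \<notin> S3_star M" using insert_sidon[OF assms(1) x(2)] by simp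
        moreover have "x \<in> S3_star M \<union> M" using u S3_eq[of M] by simp
        ultimately show False using x(2) by blast
      qed
    qed
  qed
next
  show "S3 M = UNIV \<longleftrightarrow> (S3_star M \<union> M = UNIV \<and> S3_star M \<inter> M = {})"
  proof -
    have "S3_star M \<inter> M = {}" using S3_star_disj[OF assms(1)] .
    then show ?thesis using S3_eq[of M] by simp
  qed
qed

end
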